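(* Let $\kappa\ge 1$, $0\le \ell\le\kappa$, and consider the uncertain plant $$G(s)=\frac{\sum_{i=0}^{\ell}\beta_i s^{\ell-i}}{\sum_{i=0}^{\kappa}\alpha_i s^{\kappa-i}},\qquad \alpha_0=1,$$ with real uncertain parameter vector $\theta=(\alpha_1,\dots,\alpha_\kappa,\beta_0,\dots,\beta_\ell)\in\mathbb{R}^{\kappa+\ell+1}$. Let $\mathcal{B}\subset\mathbb{R}^{\kappa+\ell+1}$ be a nonempty bounded set (the assumed uncertainty range), and suppose there is a real controller $$C(s)=\frac{\sum_{i=0}^{m} b_i s^{m-i}}{\sum_{i=0}^{n} a_i s^{n-i}},\qquad a_0=1,\quad b_0\neq 0,\quad m\le n,$$ which robustly stabilizes the unity-feedback closed loop for every $\theta\in\mathcal{B}$, i.e. for every $\theta\in\mathcal{B}$ the closed-loop characteristic polynomial $$\chi_\theta(s)=\Big(\sum_{i=0}^{n}a_i s^{n-i}\Big)\Big(\sum_{j=0}^{\kappa}\alpha_j s^{\kappa-j}\Big)+\Big(\sum_{i=0}^{m}b_i s^{m-i}\Big)\Big(\sum_{j=0}^{\ell}\beta_j s^{\ell-j}\Big)$$ has all its roots in the open left half-plane. Then there exists a parameter vector $\theta'\notin\mathcal{B}$, obtained from some element of $\mathcal{B}$ by changing a single coordinate $\alpha_i$ or $\beta_j$, for which $\chi_{\theta'}$ has a root with nonnegative real part (i.e. the closed-loop system with the same controller is unstable).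
   Context: Unity negative feedback: the closed-loop system is $C G/(1+CG)$; "stable" means the characteristic polynomial $\chi_\theta$ (which is monic of degree $n+\kappa$) is Hurwitz, i.e. all roots have strictly negative real part. *)

theory Defs
  imports "HOL-Computational_Algebra.Polynomial" Complex_Main
begin

text \<open>Parameter vector theta = (alpha_1..alpha_kappa, beta_0..beta_ell) as a real list
 of length kappa+ell+1: theta!(j-1) = alpha_j (1 <= j <= kappa), theta!(kappa+j) = beta_j.\<close>

definition plant_den :: "nat \<Rightarrow> real list \<Rightarrow> real poly" where
  "plant_den \<kappa> \<theta> = monom 1 \<kappa> + (\<Sum>j\<in>{1..\<kappa>}. monom (\<theta> ! (j - 1)) (\<kappa> - j))"

definition plant_num :: "nat \<Rightarrow> nat \<Rightarrow> real list \<Rightarrow> real poly" where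
  "plant_num \<kappa> l \<theta> = (\<Sum>j\<le>l. monom (\<theta> ! (\<kappa> + j)) (l - j))"

definition ctrl_poly :: "nat \<Rightarrow> (nat \<Rightarrow> real) \<Rightarrow> real poly" where
  "ctrl_poly n c = (\<Sum>i\<le>n. monom (c i) (n - i))"

definition char_poly ::
  "nat \<Rightarrow> (nat \<Rightarrow> real) \<Rightarrow> nat \<Rightarrow> (nat \<Rightarrow> real) \<Rightarrow> nat \<Rightarrow> nat \<Rightarrow> real list \<Rightarrow> real poly" where
  "char_poly n a m b \<kappa> l \<theta> =
     ctrl_poly n a * plant_den \<kappa> \<theta> + ctrl_poly m b * plant_num \<kappa> l \<theta>"

definition hurwitz :: "real poly \<Rightarrow> bool" where
  "hurwitz p \<longleftrightarrow> (\<forall>z. poly (map_poly complex_of_real p) z = 0 \<longrightarrow> Re z < 0)"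

end

theory Submission
  imports Defs
begin

lemma pmo: "poly (map_poly of_real p) (of_real x) = (of_real (poly p x) :: complex)"
  by (induction p) (auto simp: map_poly_pCons)

lemma ctrl0: "poly (ctrl_poly n c) 0 = c n"
proof -
  have "poly (ctrl_poly n c) 0 = (\<Sum>i\<le>n. c i * 0 ^ (n - i))"
    by (simp add: ctrl_poly_def poly_sum poly_monom)
  also have "\<dots> = (\<Sum>i\<le>n. if i = n then c n else 0)"
    by (rule sum.cong) (auto simp: power_0_left)
  finally show ?thesis by simp
qed

lemma num0: "poly (plant_num k l t) 0 = t ! (k + l)"
proof -
  have "poly (plant_num k l t) 0 = (\<Sum>j\<le>l. t ! (k + j) * 0 ^ (l - j))"
    by (simp add: plant_num_def poly_sum poly_monom)
  also have "\<dots> = (\<Sum>j\<le>l. if j = l then t ! (k + l) else 0)"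
    by (rule sum.cong) (auto simp: power_0_left)
  finally show ?thesis by simp
qed

lemma den0: assumes "k \<ge> 1" shows "poly (plant_den k t) 0 = t ! (k - 1)"
proof -
  have "poly (plant_den k t) 0 = (\<Sum>j\<in>{1..k}. t ! (j - 1) * 0 ^ (k - j))"
    using assms by (simp add: plant_den_def poly_sum poly_monom)
  also have "\<dots> = (\<Sum>j\<in>{1..k}. if j = k then t ! (k - 1) else 0)"
    by (rule sum.cong) (auto simp: power_0_left)
  finally show ?thesis using assms by simp
qed

theorem theorem1:
  fixes \<kappa> l n m :: nat and a b :: "nat \<Rightarrow> real" and B :: "real list set"
  assumes "\<kappa> \<ge> 1" and "l \<le> \<kappa>"
    and "B \<noteq> {}"
    and "\<forall>\<theta>\<in>B. length \<theta> = \<kappa> + l + 1"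
    and "\<exists>M. \<forall>\<theta>\<in>B. \<forall>i<length \<theta>. \<bar>\<theta> ! i\<bar> \<le> M"
    and "a 0 = 1" and "b 0 \<noteq> 0" and "m \<le> n"
    and "\<forall>\<theta>\<in>B. hurwitz (char_poly n a m b \<kappa> l \<theta>)"
  shows "\<exists>\<theta>\<in>B. \<exists>i < \<kappa> + l + 1. \<exists>x::real.
           \<theta>[i := x] \<notin> B \<and>
           (\<exists>z. poly (map_poly complex_of_real (char_poly n a m b \<kappa> l (\<theta>[i := x]))) z = 0
                \<and> Re z \<ge> 0)"
proof -
  have P: "poly (char_poly n a m b \<kappa> l t) 0 = a n * t ! (\<kappa> - 1) + b m * t ! (\<kappa> + l)" for t
    using assms(1) by (simp add: char_poly_def ctrl0 num0 den0)
  have R: "poly (map_poly complex_of_real (char_poly n a m b \<kappa> l t)) 0 = 0"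
    if "a n * t ! (\<kappa> - 1) + b m * t ! (\<kappa> + l) = 0" for t
  proof -
    have "poly (map_poly complex_of_real (char_poly n a m b \<kappa> l t)) (of_real 0)
        = of_real (poly (char_poly n a m b \<kappa> l t) 0)"
      by (rule pmo)
    then show ?thesis using P[of t] that by (simp only: of_real_0 of_real_eq_0_iff)
  qed
  have NB: "t \<notin> B" if "a n * t ! (\<kappa> - 1) + b m * t ! (\<kappa> + l) = 0" for t
  proof
    assume "t \<in> B"
    then have "hurwitz (char_poly n a m b \<kappa> l t)" using assms(9) by blast
    then show False using R[OF that] unfolding hurwitz_def by force
  qed
  obtain t where t: "t \<in> B" using assms(3) by blast
  have len: "length t = \<kappa> + l + 1" using t assms(4) by blast
  show ?thesis
  proof (cases "a n = 0")
    case True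
    let ?t = "t[\<kappa> + l := 0]"
    have e: "a n * ?t ! (\<kappa> - 1) + b m * ?t ! (\<kappa> + l) = 0" using True len by simp
    show ?thesis
      apply (rule bexI[OF _ t], rule exI[of _ "\<kappa> + l"], simp, rule exI[of _ 0])
      using NB[OF e] R[OF e] by force
  next
    case False
    define x where "x = - (b m * t ! (\<kappa> + l)) / a n"
    let ?t = "t[\<kappa> - 1 := x]"
    have e: "a n * ?t ! (\<kappa> - 1) + b m * ?t ! (\<kappa> + l) = 0"
      using False len assms(1) by (simp add: x_def)
    show ?thesis
      apply (rule bexI[OF _ t], rule exI[of _ "\<kappa> - 1"])
      using NB[OF e] R[OF e] assms(1) by force
  qed
qed

end
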